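(* Let $z_1,\ldots,z_N$ be points on the unit circle and $P(z)=\prod_{i=1}^N(z-z_i)$. Then there exists $w\in\mathbb{C}$ with $|w|=1$ such that $|P(w)P(-w)|=1$. *)

theory Defs
  imports "HOL-Analysis.Analysis"
begin

end

theory Submission
  imports Defs "HOL-Computational_Algebra.Polynomial"
begin

lemma cis_pow_ne1:
  assumes "0 < i" "i < M"
  shows "cis (2 * pi / real M) ^ i \<noteq> 1"
proof
  assume "cis (2 * pi / real M) ^ i = 1"
  hence "cis (real i * (2 * pi / real M)) = 1" by (metis Complex.DeMoivre)
  hence "cis (2 * pi * real i / real M) = 1" by (simp add: mult_ac)
  hence "cos (2 * pi * real i / real M) = 1" by (simp add: complex_eq_iff)
  then obtain k :: int where k0: "2 * pi * real i / real M = of_int k * 2 * pi"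
    using cos_one_2pi_int by blast
  hence k: "2 * pi * real i / real M = 2 * pi * of_int k" by simp
  have "real i = real M * of_int k" using k assms by (simp add: field_simps)
  hence "int i = int M * k" by (metis of_int_eq_iff of_int_mult of_int_of_nat_eq)
  hence e: "int i = int M * k" .
  show False
  proof (cases "k \<le> 0")
    case True
    hence "int M * k \<le> 0" by (simp add: mult_nonneg_nonpos)
    thus False using e assms by linarith
  next
    case False
    hence "int M * k \<ge> int M * 1" by (intro mult_left_mono) auto
    thus False using e assms by linarith
  qed
qed

lemma geo_zero:
  assumes "0 < i" "i < M"
  shows "(\<Sum>k<M. (cis (2 * pi / real M) ^ i) ^ k) = 0"
proof -
  let ?w = "cis (2 * pi / real M) ^ i"
  have ne: "?w \<noteq> 1" using cis_pow_ne1 assms by blast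
  have "?w ^ M = cis (2 * pi / real M) ^ (i * M)" by (simp add: power_mult)
  also have "\<dots> = cis (real (i * M) * (2 * pi / real M))" by (rule Complex.DeMoivre)
  also have "real (i * M) * (2 * pi / real M) = 2 * pi * real i" using assms by (simp add: field_simps)
  also have "cis (2 * pi * real i) = 1" by (rule cis_multiple_2pi) simp
  finally show ?thesis using ne by (simp add: geometric_sum)
qed

lemma avg_poly:
  fixes p :: "complex poly"
  assumes "degree p < M"
  shows "(\<Sum>k<M. poly p (cis (2 * pi / real M) ^ k)) = of_nat M * coeff p 0"
proof -
  let ?w = "cis (2 * pi / real M)"
  have "(\<Sum>k<M. poly p (?w ^ k)) = (\<Sum>k<M. \<Sum>i\<le>degree p. coeff p i * (?w ^ i) ^ k)"
    by (simp add: poly_altdef power_mult[symmetric] mult.commute)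
  also have "\<dots> = (\<Sum>i\<le>degree p. coeff p i * (\<Sum>k<M. (?w ^ i) ^ k))"
    by (subst sum.swap) (simp add: sum_distrib_left)
  also have "\<dots> = (\<Sum>i\<le>degree p. if i = 0 then of_nat M * coeff p 0 else 0)"
    using assms by (intro sum.cong refl) (auto simp: geo_zero)
  also have "\<dots> = of_nat M * coeff p 0" by simp
  finally show ?thesis .
qed

lemma exists_big:
  fixes p :: "complex poly"
  assumes "degree p < M"
  shows "\<exists>k. norm (poly p (cis (2 * pi / real M) ^ k)) \<ge> norm (coeff p 0)"
proof (rule ccontr)
  assume "\<not> ?thesis"
  hence lt: "\<And>k. norm (poly p (cis (2 * pi / real M) ^ k)) < norm (coeff p 0)" by (meson not_le)
  have M: "M > 0" using assms by simp
  have "real M * norm (coeff p 0) = norm (\<Sum>k<M. poly p (cis (2 * pi / real M) ^ k))"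
    using avg_poly[OF assms] by (simp add: norm_mult)
  also have "\<dots> \<le> (\<Sum>k<M. norm (poly p (cis (2 * pi / real M) ^ k)))"
    by (rule norm_sum)
  also have "\<dots> < (\<Sum>k<M. norm (coeff p 0))"
    using M by (intro sum_strict_mono) (auto simp: lt)
  finally show False by simp
qed

theorem mainTheorem13:
  fixes N :: nat and z :: "nat \<Rightarrow> complex"
  assumes "\<And>i. i \<in> {1..N} \<Longrightarrow> norm (z i) = 1"
  shows "\<exists>w::complex. norm w = 1 \<and>
           norm ((\<Prod>i=1..N. (w - z i)) * (\<Prod>i=1..N. (- w - z i))) = 1"
proof (cases "N = 0")
  case True
  then show ?thesis by (intro exI[of _ 1]) simp
next
  case False
  define p where "p = (\<Prod>i=1..N. [:(z i)^2, -1:])"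
  have pp: "poly p u = (\<Prod>i=1..N. (z i)^2 - u)" for u
    by (simp add: p_def poly_prod)
  have key: "(\<Prod>i=1..N. (w - z i)) * (\<Prod>i=1..N. (- w - z i)) = poly p (w^2)" for w
    unfolding pp prod.distrib[symmetric]
    by (intro prod.cong refl) (simp add: algebra_simps power2_eq_square)
  have deg: "degree p \<le> N"
  proof -
    have "degree p \<le> sum (degree \<circ> (\<lambda>i. [:(z i)^2, -1:])) {1..N}"
      unfolding p_def by (rule degree_prod_sum_le) simp
    also have "\<dots> \<le> sum (\<lambda>i. 1) {1..N}" by (intro sum_mono) simp
    finally show ?thesis by simp
  qed
  have c0: "norm (coeff p 0) = 1"
  proof -
    have "coeff p 0 = poly p 0" by (simp add: poly_0_coeff_0)
    also have "\<dots> = (\<Prod>i=1..N. (z i)^2)" by (simp add: pp)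
    finally have "norm (coeff p 0) = (\<Prod>i=1..N. norm (z i) ^ 2)" by (simp add: prod_norm[symmetric] norm_power)
    also have "\<dots> = 1" using assms by (intro prod.neutral) simp
    finally show ?thesis .
  qed
  obtain k where k: "norm (poly p (cis (2 * pi / real (N+1)) ^ k)) \<ge> 1"
    using exists_big[of p "N+1"] deg c0 by auto
  define a where "a = real k * (2 * pi / real (N+1))"
  have fa: "norm (poly p (cis a)) \<ge> 1" using k unfolding a_def by (metis Complex.DeMoivre)
  define b :: real where "b = Arg ((z 1)^2)"
  have z1: "norm (z 1) = 1" using assms False by auto
  hence "z 1 \<noteq> 0" by auto
  hence "cis b = sgn ((z 1)^2)" by (simp add: b_def cis_Arg)
  also have "\<dots> = (z 1)^2" using z1 by (simp add: sgn_div_norm norm_power)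
  finally have cb: "cis b = (z 1)^2" .
  have fb: "norm (poly p (cis b)) = 0"
    unfolding pp cb using False
    by (simp add: prod_zero_iff) (rule bexI[of _ 1], auto)
  define f where "f = (\<lambda>t. norm (poly p (cis t)))"
  have cont: "continuous_on S f" for S
    unfolding f_def by (intro continuous_intros)
  have "\<exists>t. f t = 1"
  proof (cases "a \<le> b")
    case True
    then show ?thesis using IVT2'[of f b 1 a] cont fa fb unfolding f_def by auto
  next
    case False
    then show ?thesis using IVT'[of f b 1 a] cont fa fb unfolding f_def by auto
  qed
  then obtain t where t: "f t = 1" by blast
  show ?thesis
  proof (intro exI conjI)
    show "norm (cis (t/2)) = 1" by simp
    have "cis (t/2) ^ 2 = cis t" by (simp add: Complex.DeMoivre)
    thus "norm ((\<Prod>i=1..N. (cis (t/2) - z i)) * (\<Prod>i=1..N. (- cis (t/2) - z i))) = 1"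
      unfolding key[of "cis (t/2)"] using t by (simp add: f_def)
  qed
qed

end
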